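(* For $n>1$ let $P_{2n}(x)=x^{2n}+x^{n+1}+x^n+x^{n-1}+1$. Then $\lim_{n\to\infty}C(P_{2n})=\frac{1}{\pi}\arccos\frac12=\frac13$.
   Context: For a polynomial $P$ of degree $d$, let $I(P)$ and $E(P)$ denote the numbers of complex zeros of $P$ (counted with multiplicity) of modulus $<1$ and $>1$ respectively, and $C(P)=\frac{I(P)+E(P)}{d}$. *)

theory Defs
  imports "HOL-Analysis.Analysis" "HOL-Computational_Algebra.Polynomial"
begin

definition inner_zeros :: "complex poly \<Rightarrow> nat" where
  "inner_zeros p = (\<Sum>z\<in>{z. poly p z = 0 \<and> cmod z < 1}. order z p)"

definition outer_zeros :: "complex poly \<Rightarrow> nat" where
  "outer_zeros p = (\<Sum>z\<in>{z. poly p z = 0 \<and> cmod z > 1}. order z p)"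

definition C_ratio :: "complex poly \<Rightarrow> real" where
  "C_ratio p = real (inner_zeros p + outer_zeros p) / real (degree p)"

definition P2n :: "nat \<Rightarrow> complex poly" where
  "P2n n = monom 1 (2*n) + monom 1 (n+1) + monom 1 n + monom 1 (n-1) + 1"

end

theory Submission
  imports Defs "HOL-Computational_Algebra.Fundamental_Theorem_Algebra"
begin

definition ff :: "nat \<Rightarrow> real \<Rightarrow> real" where
  "ff n t = 2*cos(real n*t) + 2*cos t + 1"

lemma cos2_cis: "complex_of_real (2*cos x) = cis x + cis (-x)"
  by (simp add: complex_eq_iff)

lemma poly_P_cis:
  assumes "n \<ge> 1"
  shows "poly (P2n n) (cis t) = cis (real n*t) * complex_of_real (ff n t)"
proof -
  have e1: "real (n-1) = real n - 1" using assms by simp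
  have a: "complex_of_real (ff n t) = 
     (cis (real n*t) + cis (-(real n*t)) + cis t + cis (-t) + 1)"
    unfolding ff_def using cos2_cis[of "real n * t"] cos2_cis[of t] by simp
  have b: "cis (real n*t) * (cis (real n*t) + cis (-(real n*t)) + cis t + cis (-t) + 1)
   = cis (real n*t + real n*t) + 1 + cis (real n*t + t) + cis (real n*t + - t) + cis (real n*t)"
    by (simp only: distrib_left cis_mult) simp
  have c: "poly (P2n n) (cis t) = cis (real (2*n) * t) + cis (real (n+1) * t) + cis (real n * t) + cis (real (n-1) * t) + 1"
    unfolding P2n_def by (simp only: poly_add poly_monom poly_1 Complex.DeMoivre mult_1_left)
  show ?thesis unfolding a b c e1
    by (simp add: algebra_simps)
qed


lemma sum_orders:
  fixes p :: "complex poly"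
  assumes "p \<noteq> 0"
  shows "(\<Sum>x | poly p x = 0. order x p) = degree p"
proof -
  have "degree p = size (proots p)" by (simp add: size_proots_complex)
  also have "\<dots> = (\<Sum>x\<in>set_mset (proots p). count (proots p) x)"
    by (simp add: size_multiset_overloaded_eq)
  finally show ?thesis using assms by simp
qed

lemma degree_P: assumes "n \<ge> 2" shows "degree (P2n n) = 2*n"
proof -
  have d: "degree (monom (1::complex) (n+1) + monom 1 n + monom 1 (n-1) + 1) \<le> n+1"
    by (intro degree_add_le) (auto simp: degree_monom_eq)
  have "P2n n = monom 1 (2*n) + (monom 1 (n+1) + monom 1 n + monom 1 (n-1) + 1)"
    unfolding P2n_def by (simp add: add.assoc)
  also have "degree \<dots> = 2*n"
    using d assms by (subst degree_add_eq_left) (auto simp: degree_monom_eq)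
  finally show ?thesis .
qed

lemma sin_cis: "complex_of_real (sin x) = (cis x - cis (-x)) / (2*\<i>)"
proof -
  have "cis x - cis (-x) = 2*\<i>*complex_of_real (sin x)" by (simp add: complex_eq_iff)
  then show ?thesis by simp
qed
lemma cos_cis: "complex_of_real (cos x) = (cis x + cis (-x)) / 2"
  by (simp add: complex_eq_iff field_simps)

lemma D1:
  assumes "n \<ge> 4"
  shows "cis t * poly (pderiv (P2n n)) (cis t) - of_nat n * poly (P2n n) (cis t)
     = cis (real n*t) * (2*\<i>) * complex_of_real (real n * sin (real n*t) + sin t)"
proof -
  obtain m where n: "n = m+4" using assms by (metis add.commute le_Suc_ex)
  define z where "z = cis t"
  define u where "u = cis (real m * t)"
  have z0: "z \<noteq> 0" and u0: "u \<noteq> 0" by (auto simp: z_def u_def)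
  have zk: "cis t ^ k = z^k" for k by (simp add: z_def)
  have um: "z^m = u" by (simp add: z_def u_def Complex.DeMoivre)
  have w: "cis (real n*t) = u*z^4" unfolding n um[symmetric] z_def
    by (simp only: Complex.DeMoivre cis_mult) (simp add: algebra_simps)
  have wi: "cis (-(real n*t)) = inverse (u*z^4)" by (simp add: w[symmetric] cis_inverse)
  have zi: "cis (-t) = inverse z" by (simp add: z_def cis_inverse)
  have um2: "z^(m*2) = u*u" by (metis um power_add mult_2_right)
  show ?thesis
    unfolding of_real_add of_real_mult sin_cis w wi zi
    unfolding P2n_def n
    apply (simp add: pderiv_add pderiv_monom poly_monom zk z_def[symmetric] del: of_nat_Suc)
    apply (simp add: um um2 power_add field_simps z0 u0)
    apply (simp add: algebra_simps eval_nat_numeral)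
    done
qed

lemma D2:
  assumes "n \<ge> 4"
  shows "(cis t)^2 * poly (pderiv (pderiv (P2n n))) (cis t) + cis t * poly (pderiv (P2n n)) (cis t)
     - 2 * of_nat n * cis t * poly (pderiv (P2n n)) (cis t) + (of_nat n)^2 * poly (P2n n) (cis t)
     = cis (real n*t) * 2 * complex_of_real ((real n)^2 * cos (real n*t) + cos t)"
proof -
  obtain m where n: "n = m+4" using assms by (metis add.commute le_Suc_ex)
  define z where "z = cis t"
  define u where "u = cis (real m * t)"
  have z0: "z \<noteq> 0" and u0: "u \<noteq> 0" by (auto simp: z_def u_def)
  have zk: "cis t ^ k = z^k" for k by (simp add: z_def)
  have um: "z^m = u" by (simp add: z_def u_def Complex.DeMoivre)
  have w: "cis (real n*t) = u*z^4" unfolding n um[symmetric] z_def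
    by (simp only: Complex.DeMoivre cis_mult) (simp add: algebra_simps)
  have wi: "cis (-(real n*t)) = inverse (u*z^4)" by (simp add: w[symmetric] cis_inverse)
  have zi: "cis (-t) = inverse z" by (simp add: z_def cis_inverse)
  have um2: "z^(m*2) = u*u" by (metis um power_add mult_2_right)
  show ?thesis
    unfolding of_real_add of_real_mult cos_cis w wi zi
    unfolding P2n_def n
    apply (simp add: pderiv_add pderiv_monom poly_monom zk z_def[symmetric] del: of_nat_Suc)
    apply (simp add: um um2 power_add field_simps z0 u0)
    apply (simp add: algebra_simps eval_nat_numeral)
    done
qed

lemma ff_deriv: "(ff n has_real_derivative (- 2*real n * sin (real n*x) - 2* sin x)) (at x)"
  unfolding ff_def by (auto intro!: derivative_eq_intros)

lemma ff'_deriv: "((\<lambda>x. - 2*real n * sin (real n*x) - 2* sin x) has_real_derivative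
     (- 2*(real n)^2 * cos (real n*x) - 2*cos x)) (at x)"
  by (auto intro!: derivative_eq_intros simp: power2_eq_square)

lemma ff_cont: "continuous_on S (ff n)"
  unfolding ff_def by (intro continuous_intros)

lemma cos_lip: "cos y - cos x \<le> \<bar>y - x\<bar>" for x y :: real
proof (cases "x = y")
  case False
  { fix a b :: real assume "a < b"
    from MVT2[where f=cos and ?f'="\<lambda>x. - sin x", OF this] obtain z where "cos b - cos a = (b - a) * (- sin z)"
      by (auto intro: DERIV_cos)
    hence "\<bar>cos b - cos a\<bar> \<le> \<bar>b - a\<bar>"
      by (simp add: abs_mult mult_left_le)
  } note * = this
  show ?thesis using *[of x y] *[of y x] False by (cases "x < y") (auto simp: abs_minus_commute)
qed simp

lemma abs_sin_shift: "\<bar>sin (y - real_of_int k * pi)\<bar> = \<bar>sin y\<bar>"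
proof -
  have "sin (real_of_int k * pi) = 0" by (metis mult.commute sin_npi_int)
  moreover have "\<bar>cos (real_of_int k * pi)\<bar> = 1" by (simp add: mult.commute)
  ultimately show ?thesis by (simp add: sin_diff abs_mult)
qed

lemma sin_min: assumes "0 \<le> a" "a \<le> x" "x \<le> b" "b \<le> pi"
  shows "min (sin a) (sin b) \<le> sin x"
proof (cases "x \<le> pi/2")
  case True
  then have "sin a \<le> sin x" using assms by (intro sin_monotone_2pi_le) auto
  then show ?thesis by simp
next
  case False
  have "sin (pi - b) \<le> sin (pi - x)" using assms False by (intro sin_monotone_2pi_le) auto
  then show ?thesis by simp
qed

lemma good_unique:
  assumes n: "n \<ge> 4" and lt: "t1 < t2" and r1: "ff n t1 = 0" and r2: "ff n t2 = 0"
    and g1: "\<bar>sin (real n*t1)\<bar> > 1/real n" and g2: "\<bar>sin (real n*t2)\<bar> > 1/real n"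
    and k: "\<lfloor>real n*t1/pi\<rfloor> = \<lfloor>real n*t2/pi\<rfloor>"
  shows False
proof -
  from MVT2[OF lt, of "ff n", OF ff_deriv] obtain x where x: "t1 < x" "x < t2"
     "ff n t2 - ff n t1 = (t2 - t1) * (- 2*real n * sin (real n*x) - 2* sin x)" by blast
  have "real n * sin (real n*x) = - sin x" using x lt r1 r2 by simp
  hence "real n * \<bar>sin(real n*x)\<bar> \<le> 1" by (metis abs_mult abs_minus abs_of_nat abs_sin_le_one)
  hence sx: "\<bar>sin(real n*x)\<bar> \<le> 1/real n" using n by (simp add: field_simps)
  define k where "k = \<lfloor>real n*t1/pi\<rfloor>"
  have bnd: "0 \<le> real n*t - k*pi \<and> real n*t - k*pi \<le> pi" if "\<lfloor>real n*t/pi\<rfloor> = k" for t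
  proof -
    have "k \<le> real n*t/pi" "real n*t/pi < k + 1" using that by linarith+
    then show ?thesis by (simp add: field_simps)
  qed
  have b1: "0 \<le> real n*t1 - k*pi" "real n*t1 - k*pi \<le> pi" using bnd[of t1] k_def by auto
  have b2: "0 \<le> real n*t2 - k*pi" "real n*t2 - k*pi \<le> pi" using bnd[of t2] k k_def by auto
  have m: "min (sin (real n*t1 - k*pi)) (sin (real n*t2 - k*pi)) \<le> sin (real n*x - k*pi)"
    using b1 b2 x n by (intro sin_min) (auto intro!: mult_left_mono)
  have "sin (real n*t1 - k*pi) = \<bar>sin (real n*t1)\<bar>"
    using abs_sin_shift[of "real n*t1" k] sin_ge_zero[OF b1] by simp
  moreover have "sin (real n*t2 - k*pi) = \<bar>sin (real n*t2)\<bar>"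
    using abs_sin_shift[of "real n*t2" k] sin_ge_zero[OF b2] by simp
  moreover have "sin (real n*x - k*pi) \<le> \<bar>sin (real n*x)\<bar>"
    using abs_sin_shift[of "real n*x" k] by linarith
  ultimately show False using m g1 g2 sx by linarith
qed

lemma n16: "real n \<ge> 4 \<Longrightarrow> (real n)^2 \<ge> 16 \<and> 1/(real n)^2 \<le> 1/16"
proof -
  assume a: "real n \<ge> 4"
  have "(4::real)^2 \<le> (real n)^2" using a by (intro power_mono) auto
  hence h: "16 \<le> (real n)^2" by simp
  moreover have "1/(real n)^2 \<le> 1/16" using h a by (intro divide_left_mono) auto
  ultimately show ?thesis by simp
qed

lemma sq_small: "-3/4 < (C::real) \<Longrightarrow> C < 3/4 \<Longrightarrow> C^2 < 9/16"
proof -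
  assume "-3/4 < C" "C < 3/4"
  hence "0 < (3/4 - C) * (3/4 + C)" by (intro mult_pos_pos) auto
  also have "\<dots> = 9/16 - C^2" by (simp add: algebra_simps power2_eq_square)
  finally show ?thesis by simp
qed

lemma badfacts:
  assumes n: "n \<ge> 4" and r: "ff n t = 0" and b: "\<bar>sin (real n*t)\<bar> \<le> 1/real n"
  shows "cos (real n*t) \<le> -3/4" "1/2 - 1/(real n)^2 \<le> cos t" "cos t \<le> 1/2"
proof -
  have nn: "real n \<ge> 4" using n by simp
  have s2: "(sin (real n*t))^2 \<le> 1/(real n)^2"
    using b by (metis abs_ge_zero power_mono power_one_over power2_abs)
  have c2: "(cos (real n*t))^2 \<ge> 1 - 1/(real n)^2" using s2 sin_cos_squared_add[of "real n*t"] by linarith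
  have i: "1/(real n)^2 \<le> 1/16" using n16[OF nn] by simp
  have e: "2 * cos (real n*t) = - 2 * cos t - 1" using r unfolding ff_def by linarith
  have "cos (real n*t) \<le> 1/2" using e cos_ge_minus_one[of t] by linarith
  then show c: "cos (real n*t) \<le> -3/4" using c2 i sq_small[of "cos (real n*t)"] by linarith
  have "- cos (real n*t) \<ge> 1 - 1/(real n)^2"
  proof (rule ccontr)
    assume "\<not> ?thesis"
    hence "- cos (real n*t) < 1 - 1/(real n)^2" by simp
    moreover have "0 \<le> - cos (real n*t)" using c by simp
    ultimately have "(- cos (real n*t))^2 < (1 - 1/(real n)^2)^2"
      by (intro power_strict_mono) auto
    moreover have "(1 - 1/(real n)^2)^2 \<le> (1 - 1/(real n)^2)"
    proof -
      have "(1 - 1/(real n)^2)*(1 - 1/(real n)^2) \<le> 1 * (1 - 1/(real n)^2)"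
        using i by (intro mult_right_mono) auto
      thus ?thesis by (simp add: power2_eq_square)
    qed
    moreover have "(- cos (real n*t))^2 = (cos (real n*t))^2" by simp
    ultimately show False using c2 by linarith
  qed
  then show "1/2 - 1/(real n)^2 \<le> cos t" using e by linarith
  show "cos t \<le> 1/2" using e cos_ge_minus_one[of "real n*t"] by linarith
qed

lemma bad_three:
  assumes n: "n \<ge> 4" and ord: "0 < a" "a < b" "b < c" "c < pi"
    and ra: "ff n a = 0" and rb: "ff n b = 0" and rc: "ff n c = 0"
    and ba: "\<bar>sin (real n*a)\<bar> \<le> 1/real n" and bc: "\<bar>sin (real n*c)\<bar> \<le> 1/real n"
  shows False
proof -
  have nn: "real n \<ge> 4" using n by simp
  note fa = badfacts[OF n ra ba] and fc = badfacts[OF n rc bc]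
  from MVT2[OF ord(2), of "ff n", OF ff_deriv] obtain x1 where x1: "a < x1" "x1 < b"
     "ff n b - ff n a = (b - a) * (- 2*real n * sin (real n*x1) - 2 * sin x1)" by blast
  from MVT2[OF ord(3), of "ff n", OF ff_deriv] obtain x2 where x2: "b < x2" "x2 < c"
     "ff n c - ff n b = (c - b) * (- 2*real n * sin (real n*x2) - 2 * sin x2)" by blast
  have d1: "- 2*real n * sin (real n*x1) - 2 * sin x1 = 0" using x1(1,2,3) ord ra rb by simp
  have d2: "- 2*real n * sin (real n*x2) - 2 * sin x2 = 0" using x2 ord rb rc by simp
  have "x1 < x2" using x1(2) x2(1) by simp
  from MVT2[OF this, of "\<lambda>x. - 2*real n * sin (real n*x) - 2 * sin x", OF ff'_deriv] obtain y where
    y: "x1 < y" "y < x2" "(- 2*real n * sin (real n*x2) - 2 * sin x2) - (- 2*real n * sin (real n*x1) - 2 * sin x1)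
      = (x2 - x1) * (- 2*(real n)^2 * cos (real n*y) - 2*cos y)" by blast
  have eq0: "(x2 - x1) * (- 2*(real n)^2 * cos (real n*y) - 2*cos y) = 0" using y(3) d1 d2 by linarith
  have ay: "a < y" and yc: "y < c" using y(1,2) x1(1,2) x2(1,2) by linarith+
  have "- 2*(real n)^2 * cos (real n*y) - 2*cos y = 0" using eq0 \<open>x1 < x2\<close> by simp
  hence yeq: "(real n)^2 * cos (real n*y) + cos y = 0" by linarith
  from MVT2[where f=cos and ?f'="\<lambda>x. - sin x", OF _ DERIV_cos] ord obtain xi where
    xi: "a < xi" "xi < c" "cos c - cos a = (c - a) * (- sin xi)" by (metis order.strict_trans)
  have "cos xi \<le> cos a" using xi(1,2) ord by (subst cos_mono_le_eq) auto
  moreover have "cos c \<le> cos xi" using xi(1,2) ord by (subst cos_mono_le_eq) auto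
  moreover have "1/(real n)^2 \<le> 1/16" using n16[OF nn] by simp
  ultimately have cx: "0 \<le> cos xi" "cos xi \<le> 1/2" using fa fc by linarith+
  have sp1: "sin xi > 0" using xi(1,2) ord by (intro sin_gt_zero) auto
  have "(cos xi)^2 \<le> (1/2)^2" using cx by (intro power_mono) auto
  hence "(cos xi)^2 \<le> 1/4" by (simp add: power_divide)
  hence sp2: "(sin xi)^2 \<ge> 3/4" using sin_cos_squared_add[of xi] by linarith
  note sp = sp1 sp2
  have sxi: "sin xi \<ge> 1/2"
  proof (rule ccontr)
    assume "\<not> ?thesis"
    hence "sin xi * sin xi < (1/2) * (1/2)" using sp by (intro mult_strict_mono) auto
    thus False using sp by (simp add: power2_eq_square)
  qed
  have "(c - a) * sin xi = cos a - cos c" using xi by simp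
  also have "\<dots> \<le> 1/(real n)^2" using fa fc by linarith
  finally have h1: "(c - a) * sin xi \<le> 1/(real n)^2" .
  have "(c - a) * (1/2) \<le> (c - a) * sin xi" using sxi ord by (intro mult_left_mono) auto
  hence "(c - a) * (1/2) \<le> 1/(real n)^2" using h1 by linarith
  hence ca: "c - a \<le> 2/(real n)^2" by simp
  have "cos (real n*y) - cos (real n*a) \<le> \<bar>real n*y - real n*a\<bar>" by (rule cos_lip)
  also have "\<dots> = real n * (y - a)" using ay by (simp add: right_diff_distrib[symmetric] abs_mult)
  also have "\<dots> \<le> real n * (2/(real n)^2)" using ca ay yc by (intro mult_left_mono) auto
  also have "\<dots> = 2 / real n" using nn by (simp add: power2_eq_square)
  also have "\<dots> \<le> 1/2" using nn by (simp add: field_simps)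
  finally have "cos (real n*y) \<le> -1/4" using fa by linarith
  hence "(real n)^2 * cos (real n*y) \<le> (real n)^2 * (-1/4)" by (intro mult_left_mono) auto
  moreover have "(real n)^2 \<ge> 16" using n16[OF nn] by simp
  ultimately show False using yeq cos_le_one[of y] by linarith
qed

lemma ivt_root:
  assumes n: "n \<ge> 4" and k1: "real n < 3 * real k" and k2: "k + 1 \<le> n"
  shows "\<exists>t. real k*pi/real n < t \<and> t < real (k+1)*pi/real n \<and> ff n t = 0"
proof -
  have val: "ff n (real j*pi/real n) = 2*(-1)^j + 2*cos (real j*pi/real n) + 1" for j
    using n by (simp add: ff_def)
  have cb: "-1 \<le> cos (real j*pi/real n) \<and> cos (real j*pi/real n) < 1/2" if "k \<le> j" "j \<le> n" for j
  proof -
    have "pi/3 < real j*pi/real n" using that k1 n by (simp add: field_simps) 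
    moreover have "real j*pi/real n \<le> pi" using that n by (simp add: field_simps)
    ultimately have "cos (real j*pi/real n) < cos (pi/3)"
      by (subst cos_mono_less_eq) auto
    then show ?thesis by (simp add: cos_60)
  qed
  have pos: "ff n (real j*pi/real n) > 0" if "even j" "k \<le> j" "j \<le> n" for j
  proof -
    have "(-1::real)^j = 1" using that(1) by simp
    then show ?thesis using val[of j] cb[OF that(2,3)] by linarith
  qed
  have neg: "ff n (real j*pi/real n) < 0" if "odd j" "k \<le> j" "j \<le> n" for j
  proof -
    have "(-1::real)^j = -1" using that(1) by simp
    then show ?thesis using val[of j] cb[OF that(2,3)] by linarith
  qed
  let ?a = "real k*pi/real n" and ?b = "real (k+1)*pi/real n"
  have ab: "?a < ?b" using n by (simp add: field_simps)
  have "\<exists>t. ?a \<le> t \<and> t \<le> ?b \<and> ff n t = 0"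
  proof (cases "even k")
    case True
    then show ?thesis using pos[of k] neg[of "k+1"] k2 ab
      by (intro IVT2' ff_cont) auto
  next
    case False
    then show ?thesis using neg[of k] pos[of "k+1"] k2 ab
      by (intro IVT' ff_cont) auto
  qed
  then obtain t where t: "?a \<le> t" "t \<le> ?b" "ff n t = 0" by blast
  have "t \<noteq> ?a" using t pos[of k] neg[of k] k2 by (cases "even k") auto
  moreover have "t \<noteq> ?b" using t pos[of "k+1"] neg[of "k+1"] k2
    by (cases "even (k+1)") (auto simp del: of_nat_Suc)
  ultimately show ?thesis using t by (intro exI[of _ t]) auto
qed


lemma P_ne0: "n \<ge> 2 \<Longrightarrow> P2n n \<noteq> 0"
  using degree_P[of n] by auto

lemma root_iff: "n \<ge> 1 \<Longrightarrow> poly (P2n n) (cis t) = 0 \<longleftrightarrow> ff n t = 0"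
  using poly_P_cis[of n t] by simp

lemma order_ge2:
  assumes n: "n \<ge> 4" and r: "poly (P2n n) (cis t) = 0" and o: "order (cis t) (P2n n) \<ge> 2"
  shows "real n * sin (real n * t) + sin t = 0"
proof -
  have P0: "P2n n \<noteq> 0" using n by (intro P_ne0) auto
  have dP: "degree (pderiv (P2n n)) = 2*n - 1" using n by (simp add: degree_pderiv degree_P)
  hence P10: "pderiv (P2n n) \<noteq> 0" using n by auto
  have "order (cis t) (P2n n) = Suc (order (cis t) (pderiv (P2n n)))" by (rule order_pderiv[OF P0 r])
  hence "order (cis t) (pderiv (P2n n)) > 0" using o by simp
  hence r1: "poly (pderiv (P2n n)) (cis t) = 0" using order_gt_0_iff[OF P10] by simp
  have "cis (real n*t) * (2*\<i>) * complex_of_real (real n * sin (real n*t) + sin t) = 0"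
    using D1[OF n, of t] r r1 by simp
  then show ?thesis by (simp del: of_real_add of_real_mult)
qed

lemma order_ge3:
  assumes n: "n \<ge> 4" and r: "poly (P2n n) (cis t) = 0" and o: "order (cis t) (P2n n) \<ge> 3"
  shows "(real n)^2 * cos (real n * t) + cos t = 0"
proof -
  have P0: "P2n n \<noteq> 0" using n by (intro P_ne0) auto
  have dP: "degree (pderiv (P2n n)) = 2*n - 1" using n by (simp add: degree_pderiv degree_P)
  hence P10: "pderiv (P2n n) \<noteq> 0" using n by auto
  have "degree (pderiv (pderiv (P2n n))) = 2*n - 2" using dP by (simp add: degree_pderiv)
  hence P20: "pderiv (pderiv (P2n n)) \<noteq> 0" using n by auto
  have "order (cis t) (P2n n) = Suc (order (cis t) (pderiv (P2n n)))" by (rule order_pderiv[OF P0 r])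
  hence o1: "order (cis t) (pderiv (P2n n)) \<ge> 2" using o by simp
  have "order (cis t) (pderiv (P2n n)) > 0" using o1 by simp
  hence r1: "poly (pderiv (P2n n)) (cis t) = 0" using order_gt_0_iff[OF P10] by simp
  have "order (cis t) (pderiv (P2n n)) = Suc (order (cis t) (pderiv (pderiv (P2n n))))"
    by (rule order_pderiv[OF P10 r1])
  hence "order (cis t) (pderiv (pderiv (P2n n))) > 0" using o1 by simp
  hence r2: "poly (pderiv (pderiv (P2n n))) (cis t) = 0" using order_gt_0_iff[OF P20] by simp
  have "cis (real n*t) * 2 * complex_of_real ((real n)^2 * cos (real n*t) + cos t) = 0"
    using D2[OF n, of t] r r1 r2 by simp
  then show ?thesis by (simp del: of_real_add of_real_mult)
qed


definition TT :: "nat \<Rightarrow> real set" where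
  "TT n = {t. -pi < t \<and> t \<le> pi \<and> ff n t = 0}"

lemma ff_even: "ff n (-t) = ff n t"
  by (simp add: ff_def)

lemma Zs_eq: assumes n: "n \<ge> 4"
  shows "{z. poly (P2n n) z = 0 \<and> cmod z = 1} = cis ` TT n"
proof (intro equalityI subsetI)
  fix z assume z: "z \<in> {z. poly (P2n n) z = 0 \<and> cmod z = 1}"
  hence z0: "z \<noteq> 0" by auto
  have zc: "cis (Arg z) = z" using z cis_Arg[OF z0] by (simp add: sgn_eq)
  have "ff n (Arg z) = 0" using root_iff[of n "Arg z"] n z zc by simp
  hence "Arg z \<in> TT n" using Arg_bounded[of z] by (simp add: TT_def)
  thus "z \<in> cis ` TT n" using zc by (metis image_eqI)
next
  fix z assume "z \<in> cis ` TT n"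
  then obtain t where t: "t \<in> TT n" "z = cis t" by blast
  thus "z \<in> {z. poly (P2n n) z = 0 \<and> cmod z = 1}"
    using root_iff[of n t] n by (simp add: TT_def)
qed

lemma inj_cis_TT: "inj_on cis (TT n)"
proof (rule inj_on_inverseI[of _ Arg])
  fix t assume "t \<in> TT n" thus "Arg (cis t) = t" by (intro Arg_cis) (auto simp: TT_def)
qed

lemma finite_TT: assumes n: "n \<ge> 4" shows "finite (TT n)"
proof -
  have P0: "P2n n \<noteq> 0" using n by (intro P_ne0) auto
  have "finite {z. poly (P2n n) z = 0 \<and> cmod z = 1}"
    by (rule rev_finite_subset[OF poly_roots_finite[OF P0]]) auto
  hence "finite (cis ` TT n)" using Zs_eq[OF n] by simp
  thus ?thesis using finite_image_iff[OF inj_cis_TT] by blast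
qed

definition UU :: "nat \<Rightarrow> nat" where
  "UU n = (\<Sum>t\<in>TT n. order (cis t) (P2n n))"

lemma split_count: assumes n: "n \<ge> 4"
  shows "inner_zeros (P2n n) + outer_zeros (P2n n) + UU n = 2*n"
proof -
  let ?P = "P2n n"
  have P0: "?P \<noteq> 0" using n by (intro P_ne0) auto
  let ?R = "{x. poly ?P x = 0}"
  let ?A = "{z. poly ?P z = 0 \<and> cmod z < 1}"
  let ?B = "{z. poly ?P z = 0 \<and> cmod z > 1}"
  let ?C = "{z. poly ?P z = 0 \<and> cmod z = 1}"
  have fR: "finite ?R" by (rule poly_roots_finite[OF P0])
  have fA: "finite ?A" by (rule rev_finite_subset[OF fR]) auto
  have fB: "finite ?B" by (rule rev_finite_subset[OF fR]) auto
  have fC: "finite ?C" by (rule rev_finite_subset[OF fR]) auto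
  have R: "?R = ?A \<union> ?B \<union> ?C" by auto
  have "(\<Sum>x\<in>?R. order x ?P) = 2*n" using sum_orders[OF P0] degree_P[of n] n by simp
  also have "(\<Sum>x\<in>?R. order x ?P) = (\<Sum>x\<in>?A. order x ?P) + (\<Sum>x\<in>?B. order x ?P) + (\<Sum>x\<in>?C. order x ?P)"
    unfolding R using fA fB fC by (subst sum.union_disjoint, auto)+
  also have "(\<Sum>x\<in>?C. order x ?P) = UU n"
    unfolding Zs_eq[OF n] UU_def by (rule sum.reindex_cong[OF inj_cis_TT refl refl])
  finally show ?thesis unfolding inner_zeros_def outer_zeros_def by simp
qed

lemma divb1: "0 < (n::real) \<Longrightarrow> k*pi/n < r \<Longrightarrow> k < n*r/pi"
  by (simp add: pos_divide_less_eq pos_less_divide_eq mult.commute)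
lemma divb2: "0 < (n::real) \<Longrightarrow> r < (k+1)*pi/n \<Longrightarrow> n*r/pi < k + 1"
  by (simp add: pos_divide_less_eq pos_less_divide_eq mult.commute)

lemma U_ge_card: assumes n: "n \<ge> 4" shows "card (TT n) \<le> UU n"
proof -
  have P0: "P2n n \<noteq> 0" using n by (intro P_ne0) auto
  have "card (TT n) = (\<Sum>t\<in>TT n. 1)" by simp
  also have "\<dots> \<le> UU n" unfolding UU_def
  proof (rule sum_mono)
    fix t assume "t \<in> TT n"
    hence "poly (P2n n) (cis t) = 0" using root_iff[of n t] n by (simp add: TT_def)
    thus "1 \<le> order (cis t) (P2n n)" using order_gt_0_iff[OF P0] by (simp add: Suc_le_eq)
  qed
  finally show ?thesis .
qed

lemma card_TT_lower: assumes n: "n \<ge> 4" shows "4 * real n / 3 - 2 \<le> real (card (TT n))"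
proof -
  define K where "K = {k::nat. real n < 3 * real k \<and> k + 1 \<le> n}"
  define r where "r k = (SOME t. real k*pi/real n < t \<and> t < real (k+1)*pi/real n \<and> ff n t = 0)" for k
  have nn: "real n > 0" using n by simp
  have rp: "real k*pi/real n < r k \<and> r k < real (k+1)*pi/real n \<and> ff n (r k) = 0" if "k \<in> K" for k
    unfolding r_def by (rule someI_ex, rule ivt_root) (use n that in \<open>auto simp: K_def\<close>)
  have fl: "\<lfloor>real n * r k / pi\<rfloor> = int k" if "k \<in> K" for k
  proof -
    have "real k < real n * r k / pi" using divb1[OF nn, of "real k" "r k"] rp[OF that] by blast
    moreover have "r k < (real k + 1) * pi / real n" using rp[OF that] by (simp add: add.commute)
    hence "real n * r k / pi < real k + 1" using divb2[OF nn, of "r k" "real k"] by blast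
    ultimately show ?thesis by (intro floor_unique) auto
  qed
  have injr: "inj_on r K"
  proof (rule inj_onI)
    fix k l assume kl: "k \<in> K" "l \<in> K" "r k = r l"
    have "int k = int l" using fl[OF kl(1)] fl[OF kl(2)] kl(3) by metis
    thus "k = l" by simp
  qed
  have rpos: "0 < r k" "r k < pi" if "k \<in> K" for k
  proof -
    have "0 \<le> real k*pi/real n" by simp
    thus "0 < r k" using rp[OF that] by linarith
    have "real (k+1) \<le> real n" using that by (simp add: K_def del: of_nat_Suc)
    hence "real (k+1)*pi \<le> pi * real n" by (simp add: mult.commute)
    hence "real (k+1)*pi/real n \<le> pi" using nn by (simp add: pos_divide_le_eq)
    thus "r k < pi" using rp[OF that] by linarith
  qed
  let ?A = "r ` K" and ?B = "uminus ` r ` K"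
  have inT: "r k \<in> TT n" "- r k \<in> TT n" if k: "k \<in> K" for k
  proof -
    have f: "ff n (r k) = 0" using rp[OF k] by blast
    have "- pi < r k" "r k \<le> pi" "- pi < - r k" "- r k \<le> pi" using rpos[OF k] by linarith+
    thus "r k \<in> TT n" "- r k \<in> TT n" using f by (simp_all add: TT_def ff_even)
  qed
  have sub: "?A \<union> ?B \<subseteq> TT n"
  proof
    fix x assume "x \<in> ?A \<union> ?B"
    hence "x \<in> ?A \<or> x \<in> ?B" by (simp only: Un_iff)
    thus "x \<in> TT n"
    proof
      assume "x \<in> ?A"
      then obtain k where "k \<in> K" "x = r k" by (auto simp only: image_iff)
      thus ?thesis using inT by simp
    next
      assume "x \<in> ?B"
      then obtain k where "k \<in> K" "x = - r k" by (auto simp only: image_iff image_comp o_def)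
      thus ?thesis using inT by simp
    qed
  qed
  have disj: "?A \<inter> ?B = {}"
  proof (rule ccontr)
    assume "?A \<inter> ?B \<noteq> {}"
    then obtain x where x1: "x \<in> ?A" and x2: "x \<in> ?B" by auto
    from x1 obtain k where k: "k \<in> K" "x = r k" by (auto simp only: image_iff)
    from x2 obtain l where l: "l \<in> K" "x = - r l" by (auto simp only: image_iff)
    show False using rpos(1)[OF k(1)] rpos(1)[OF l(1)] k(2) l(2) by linarith
  qed
  have fK: "finite K" unfolding K_def by (rule finite_subset[of _ "{..n}"]) auto
  have cA: "card ?A = card K" by (rule card_image[OF injr])
  have cB: "card ?B = card K" using cA by (simp add: card_image)
  have "card (?A \<union> ?B) = 2 * card K" using disj fK cA cB by (simp add: card_Un_disjoint)
  moreover have "card (?A \<union> ?B) \<le> card (TT n)" by (rule card_mono[OF finite_TT[OF n] sub])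
  ultimately have c1: "2 * card K \<le> card (TT n)" by simp
  have "{n div 3 + 1..<n} \<subseteq> K"
  proof
    fix k assume k: "k \<in> {n div 3 + 1..<n}"
    hence "n < 3 * k" by auto
    hence "real n < 3 * real k" by linarith
    thus "k \<in> K" using k by (auto simp: K_def)
  qed
  hence "card {n div 3 + 1..<n} \<le> card K" by (rule card_mono[OF fK])
  hence c2: "n - (n div 3 + 1) \<le> card K" by simp
  have "3 * (n div 3) \<le> n" by simp
  hence c3: "3 * real (n div 3) \<le> real n" by linarith
  have "n div 3 + 1 \<le> n" using n by simp
  hence "real (n - (n div 3 + 1)) = real n - real (n div 3) - 1" by (simp add: of_nat_diff)
  hence "real n - real (n div 3) - 1 \<le> real (card K)" using c2 by (metis of_nat_le_iff)
  moreover have "2 * real (card K) \<le> real (card (TT n))" using c1 by (metis of_nat_le_iff of_nat_mult of_nat_numeral)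
  ultimately show ?thesis using c3 by linarith
qed

lemma finite_int_interval: "finite {k::int. a \<le> of_int k \<and> of_int k \<le> b}" for a b :: real
proof -
  have eq: "{k::int. a \<le> of_int k \<and> of_int k \<le> b} = {\<lceil>a\<rceil>..\<lfloor>b\<rfloor>}"
    by (auto simp: ceiling_le_iff le_floor_iff)
  show ?thesis unfolding eq by simp
qed

lemma card_int_interval:
  assumes "a \<le> b"
  shows "real (card {k::int. a \<le> of_int k \<and> of_int k \<le> b}) \<le> b - a + 1"
proof -
  have eq: "{k::int. a \<le> of_int k \<and> of_int k \<le> b} = {\<lceil>a\<rceil>..\<lfloor>b\<rfloor>}"
    by (auto simp: ceiling_le_iff le_floor_iff)
  have c: "card {\<lceil>a\<rceil>..\<lfloor>b\<rfloor>} = nat (\<lfloor>b\<rfloor> - \<lceil>a\<rceil> + 1)" by simp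
  have f1: "real_of_int \<lfloor>b\<rfloor> \<le> b" by (rule of_int_floor_le)
  have f2: "a \<le> real_of_int \<lceil>a\<rceil>" by (rule le_of_int_ceiling)
  show ?thesis
  proof (cases "\<lfloor>b\<rfloor> - \<lceil>a\<rceil> + 1 \<ge> 0")
    case True
    hence "real (nat (\<lfloor>b\<rfloor> - \<lceil>a\<rceil> + 1)) = real_of_int (\<lfloor>b\<rfloor> - \<lceil>a\<rceil> + 1)" by simp
    thus ?thesis unfolding eq c using f1 f2 by linarith
  next
    case False
    hence "nat (\<lfloor>b\<rfloor> - \<lceil>a\<rceil> + 1) = 0" by simp
    thus ?thesis unfolding eq c using assms by simp
  qed
qed

lemma three_elems:
  fixes S :: "real set"
  assumes "finite S" "card S \<ge> 3"
  shows "\<exists>a\<in>S. \<exists>b\<in>S. \<exists>c\<in>S. a < b \<and> b < c"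
proof -
  obtain T where T: "T \<subseteq> S" "card T = 3" using assms by (meson obtain_subset_with_card_n)
  then obtain x y z where xyz: "T = {x, y, z}" "x \<noteq> y" "x \<noteq> z" "y \<noteq> z"
    by (auto simp: card_3_iff)
  have "x \<in> S" "y \<in> S" "z \<in> S" using T xyz by auto
  moreover have "\<exists>a\<in>{x,y,z}. \<exists>b\<in>{x,y,z}. \<exists>c\<in>{x,y,z}. a < b \<and> b < c"
    using xyz(2-4) by (cases "x < y"; cases "y < z"; cases "x < z") auto
  ultimately show ?thesis by blast
qed

lemma root_cos_le: "ff n t = 0 \<Longrightarrow> cos t \<le> 1/2"
  using cos_ge_minus_one[of "real n * t"] unfolding ff_def by linarith

lemma abs_t_ge: assumes "-pi < t" "t \<le> pi" "cos t \<le> 1/2" shows "pi/3 \<le> \<bar>t\<bar>"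
proof (rule ccontr)
  assume "\<not> ?thesis"
  hence a: "\<bar>t\<bar> < pi/3" by simp
  have "cos (pi/3) < cos \<bar>t\<bar>" using a by (subst cos_mono_less_eq) auto
  moreover have "cos \<bar>t\<bar> = cos t" by (cases "t \<ge> 0") auto
  ultimately show False using assms(3) by (simp add: cos_60)
qed

lemma card_Tb: assumes n: "n \<ge> 4"
  shows "card {t\<in>TT n. \<bar>sin (real n * t)\<bar> \<le> 1/real n} \<le> 4"
proof -
  let ?Tb = "{t\<in>TT n. \<bar>sin (real n * t)\<bar> \<le> 1/real n}"
  define Bp where "Bp = {t\<in>?Tb. 0 < t \<and> t < pi}"
  have fT: "finite (TT n)" by (rule finite_TT[OF n])
  have fB: "finite Bp" unfolding Bp_def by (rule finite_subset[OF _ fT]) auto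
  have nn: "real n \<ge> 4" using n by simp
  have i16: "1/(real n)^2 \<le> 1/16" using n16[OF nn] by simp
  have sub: "?Tb \<subseteq> Bp \<union> uminus ` Bp"
  proof
    fix t assume t: "t \<in> ?Tb"
    hence r: "ff n t = 0" and b: "\<bar>sin (real n * t)\<bar> \<le> 1/real n" and tb: "-pi < t" "t \<le> pi"
      by (auto simp: TT_def)
    have ct: "1/2 - 1/(real n)^2 \<le> cos t" by (rule badfacts(2)[OF n r b])
    have "t \<noteq> 0" using r by (auto simp: ff_def)
    moreover have "t \<noteq> pi" using ct i16 by auto
    moreover have "ff n (-t) = 0" using r by (simp add: ff_even)
    moreover have "\<bar>sin (real n * (-t))\<bar> \<le> 1/real n" using b by simp
    ultimately show "t \<in> Bp \<union> uminus ` Bp" using t tb unfolding Bp_def TT_def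
      by (cases "t > 0") (auto intro!: image_eqI[of t uminus "-t"])
  qed
  have cB: "card Bp \<le> 2"
  proof (rule ccontr)
    assume "\<not> ?thesis"
    then obtain a b c where abc: "a \<in> Bp" "b \<in> Bp" "c \<in> Bp" "a < b" "b < c"
      using three_elems[OF fB] by force
    show False
      by (rule bad_three[OF n, of a b c]) (use abc in \<open>auto simp: Bp_def TT_def\<close>)
  qed
  have "card ?Tb \<le> card (Bp \<union> uminus ` Bp)" by (rule card_mono) (use fB sub in auto)
  also have "\<dots> \<le> card Bp + card (uminus ` Bp)" by (rule card_Un_le)
  also have "card (uminus ` Bp) \<le> card Bp" by (rule card_image_le[OF fB])
  finally show ?thesis using cB by linarith
qed

lemma card_Tg: assumes n: "n \<ge> 4"
  shows "real (card {t\<in>TT n. \<bar>sin (real n * t)\<bar> > 1/real n}) \<le> 4 * real n / 3 + 3"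
proof -
  let ?Tg = "{t\<in>TT n. \<bar>sin (real n * t)\<bar> > 1/real n}"
  define phi where "phi t = \<lfloor>real n * t / pi\<rfloor>" for t
  have fT: "finite (TT n)" by (rule finite_TT[OF n])
  have nn: "real n > 0" using n by simp
  have inj: "inj_on phi ?Tg"
  proof (rule inj_onI)
    fix x y assume x: "x \<in> ?Tg" and y: "y \<in> ?Tg" and e: "phi x = phi y"
    show "x = y"
    proof (rule ccontr)
      assume "x \<noteq> y"
      hence "x < y \<or> y < x" by linarith
      thus False
      proof
        assume "x < y"
        show False by (rule good_unique[OF n \<open>x < y\<close>]) (use x y e in \<open>auto simp: TT_def phi_def\<close>)
      next
        assume "y < x"
        show False by (rule good_unique[OF n \<open>y < x\<close>]) (use x y e in \<open>auto simp: TT_def phi_def\<close>)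
      qed
    qed
  qed
  define I1 where "I1 = {k::int. real n / 3 - 1 \<le> of_int k \<and> of_int k \<le> real n}"
  define I2 where "I2 = {k::int. - real n \<le> of_int k \<and> of_int k \<le> - real n / 3}"
  have sub: "phi ` ?Tg \<subseteq> I1 \<union> I2"
  proof
    fix k assume "k \<in> phi ` ?Tg"
    then obtain t where t: "t \<in> ?Tg" and k: "k = phi t" by blast
    have tb: "-pi < t" "t \<le> pi" and r: "ff n t = 0" using t by (auto simp: TT_def)
    have at: "pi/3 \<le> \<bar>t\<bar>" by (rule abs_t_ge[OF tb root_cos_le[OF r]])
    have fl1: "real_of_int k \<le> real n * t / pi" and fl2: "real n * t / pi < real_of_int k + 1"
      unfolding k phi_def by linarith+
    show "k \<in> I1 \<union> I2"
    proof (cases "t \<ge> 0")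
      case True
      hence "pi/3 \<le> t" using at by simp
      hence "real n * (pi/3) \<le> real n * t" using nn by (intro mult_left_mono) auto
      hence "real n / 3 \<le> real n * t / pi" by (simp add: field_simps)
      moreover have "real n * t \<le> real n * pi" using tb nn by (intro mult_left_mono) auto
      hence "real n * t / pi \<le> real n" by (simp add: field_simps)
      ultimately have "real n / 3 - 1 \<le> real_of_int k" "real_of_int k \<le> real n" using fl1 fl2 by linarith+
      hence "k \<in> I1" unfolding I1_def by simp
      thus ?thesis by simp
    next
      case False
      hence "t \<le> - (pi/3)" using at by simp
      hence "real n * t \<le> real n * (- (pi/3))" using nn by (intro mult_left_mono) auto
      hence "real n * t / pi \<le> - real n / 3" by (simp add: field_simps)
      moreover have "real n * (-pi) < real n * t" using tb nn by (intro mult_strict_left_mono) auto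
      hence "- real n < real n * t / pi" by (simp add: field_simps)
      ultimately have "- real n - 1 < real_of_int k" "real_of_int k \<le> - real n / 3" using fl1 fl2 by linarith+
      moreover have "- real n \<le> real_of_int k"
      proof -
        have "- int n - 1 < k" using \<open>- real n - 1 < real_of_int k\<close> by linarith
        thus ?thesis by linarith
      qed
      ultimately have "k \<in> I2" unfolding I2_def by simp
      thus ?thesis by simp
    qed
  qed
  have fI1: "finite I1" unfolding I1_def by (rule finite_int_interval)
  have fI2: "finite I2" unfolding I2_def by (rule finite_int_interval)
  have "card ?Tg = card (phi ` ?Tg)" by (rule card_image[OF inj, symmetric])
  also have "\<dots> \<le> card (I1 \<union> I2)" by (rule card_mono) (use fI1 fI2 sub in auto)
  also have "\<dots> \<le> card I1 + card I2" by (rule card_Un_le)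
  finally have c: "real (card ?Tg) \<le> real (card I1) + real (card I2)" by linarith
  have c1: "real (card I1) \<le> real n - (real n / 3 - 1) + 1" unfolding I1_def
    by (rule card_int_interval) simp
  have c2: "real (card I2) \<le> - real n / 3 - (- real n) + 1" unfolding I2_def
    by (rule card_int_interval) simp
  show ?thesis using c c1 c2 by linarith
qed

lemma UU_upper: assumes n: "n \<ge> 4" shows "real (UU n) \<le> 4 * real n / 3 + 11"
proof -
  let ?Tg = "{t\<in>TT n. \<bar>sin (real n * t)\<bar> > 1/real n}"
  let ?Tb = "{t\<in>TT n. \<bar>sin (real n * t)\<bar> \<le> 1/real n}"
  let ?o = "\<lambda>t. order (cis t) (P2n n)"
  have fT: "finite (TT n)" by (rule finite_TT[OF n])
  have nn: "real n \<ge> 4" using n by simp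
  have split: "TT n = ?Tg \<union> ?Tb" by auto
  have "UU n = sum ?o ?Tg + sum ?o ?Tb"
    unfolding UU_def by (subst split, rule sum.union_disjoint) (use fT in auto)
  moreover have "sum ?o ?Tg \<le> sum (\<lambda>_. 1) ?Tg"
  proof (rule sum_mono)
    fix t assume t: "t \<in> ?Tg"
    hence r: "poly (P2n n) (cis t) = 0" using root_iff[of n t] n by (simp add: TT_def)
    show "?o t \<le> 1"
    proof (rule ccontr)
      assume "\<not> ?o t \<le> 1"
      hence "real n * sin (real n * t) + sin t = 0" by (intro order_ge2[OF n r]) simp
      hence "real n * \<bar>sin (real n * t)\<bar> \<le> 1"
        by (metis abs_mult abs_minus abs_of_nat abs_sin_le_one add_eq_0_iff)
      hence "\<bar>sin (real n * t)\<bar> \<le> 1 / real n" using nn by (simp add: field_simps)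
      thus False using t by simp
    qed
  qed
  moreover have "sum ?o ?Tb \<le> sum (\<lambda>_. 2) ?Tb"
  proof (rule sum_mono)
    fix t assume t: "t \<in> ?Tb"
    hence r: "poly (P2n n) (cis t) = 0" and r': "ff n t = 0" using root_iff[of n t] n by (auto simp: TT_def)
    have b: "\<bar>sin (real n * t)\<bar> \<le> 1/real n" using t by simp
    show "?o t \<le> 2"
    proof (rule ccontr)
      assume "\<not> ?o t \<le> 2"
      hence e: "(real n)^2 * cos (real n * t) + cos t = 0" by (intro order_ge3[OF n r]) simp
      have c: "cos (real n * t) \<le> -3/4" by (rule badfacts(1)[OF n r' b])
      have "(real n)^2 * cos (real n * t) \<le> (real n)^2 * (-3/4)" using c by (intro mult_left_mono) auto
      moreover have "(real n)^2 \<ge> 16" using n16[OF nn] by simp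
      moreover have "(real n)^2 * (-3/4) = -(3/4)*(real n)^2" by simp
      ultimately show False using e cos_le_one[of t] by linarith
    qed
  qed
  moreover have "real (card ?Tg) \<le> 4 * real n / 3 + 3" by (rule card_Tg[OF n])
  moreover have "card ?Tb \<le> 4" by (rule card_Tb[OF n])
  ultimately have "UU n \<le> card ?Tg + 2 * card ?Tb" by simp
  hence "real (UU n) \<le> real (card ?Tg) + 2 * real (card ?Tb)" by linarith
  moreover have "real (card ?Tb) \<le> 4" using \<open>card ?Tb \<le> 4\<close> by linarith
  ultimately show ?thesis using \<open>real (card ?Tg) \<le> 4 * real n / 3 + 3\<close> by linarith
qed

lemma C_bound: assumes n: "n \<ge> 4" shows "\<bar>C_ratio (P2n n) - 1/3\<bar> \<le> 6 / real n"
proof -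
  define U where "U = real (UU n)"
  have nn: "real n \<ge> 4" using n by simp
  have io: "real (inner_zeros (P2n n) + outer_zeros (P2n n)) = 2 * real n - U"
    using split_count[OF n] unfolding U_def
    by (metis add_diff_cancel_right' of_nat_add of_nat_mult of_nat_numeral diff_add_cancel)
  have lo: "4 * real n / 3 - 2 \<le> U"
    using card_TT_lower[OF n] U_ge_card[OF n] unfolding U_def by (meson of_nat_le_iff order_trans)
  have up: "U \<le> 4 * real n / 3 + 11" using UU_upper[OF n] unfolding U_def .
  have "C_ratio (P2n n) = (2 * real n - U) / (2 * real n)"
  proof -
    have d: "degree (P2n n) = 2*n" using n by (intro degree_P) auto
    show ?thesis unfolding C_ratio_def io d by simp
  qed
  hence "C_ratio (P2n n) - 1/3 = (4 * real n / 3 - U) / (2 * real n)"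
    using nn by (simp add: field_simps)
  hence "\<bar>C_ratio (P2n n) - 1/3\<bar> = \<bar>4 * real n / 3 - U\<bar> / (2 * real n)"
    using nn by simp
  also have "\<dots> \<le> 11 / (2 * real n)"
    using lo up nn by (intro divide_right_mono) auto
  also have "\<dots> \<le> 6 / real n" using nn by (simp add: field_simps)
  finally show ?thesis .
qed

theorem mainTheorem5:
  shows "(\<lambda>n. C_ratio (P2n n)) \<longlonglongrightarrow> arccos (1/2) / pi
         \<and> arccos (1/2) / pi = 1/3"
proof
  show e: "arccos (1/2) / pi = 1/3" by simp
  show "(\<lambda>n. C_ratio (P2n n)) \<longlonglongrightarrow> arccos (1/2) / pi"
    unfolding e
  proof (rule LIMSEQ_I)
    fix r :: real assume r: "0 < r"
    define N where "N = max 4 (nat \<lceil>6/r\<rceil> + 1)"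
    show "\<exists>no. \<forall>n\<ge>no. norm (C_ratio (P2n n) - 1/3) < r"
    proof (intro exI allI impI)
      fix n assume "N \<le> n"
      hence n4: "n \<ge> 4" and n2: "nat \<lceil>6/r\<rceil> + 1 \<le> n" unfolding N_def by auto
      have "6/r \<le> real (nat \<lceil>6/r\<rceil>)" by linarith
      hence "6/r < real n" using n2 by linarith
      hence "6 < r * real n" using r by (simp add: field_simps)
      hence "6 / real n < r" using n4 by (simp add: field_simps)
      thus "norm (C_ratio (P2n n) - 1/3) < r" using C_bound[OF n4] by simp
    qed
  qed
qed


end
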